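(* Let $K$ be a field, $n\ge3$, and $\boldsymbol{\lambda}=(\lambda_1,\dots,\lambda_n)$ a vector of positive integers with $\gcd(\lambda_1,\dots,\lambda_n)>n-2$. Then the monomial ideal $I(\boldsymbol{\lambda})\subseteq K[x_1,\dots,x_n]$ is normal.
   Context: $I(\boldsymbol{\lambda})$ is the integral closure in $K[x_1,\dots,x_n]$ of $(x_1^{\lambda_1},\dots,x_n^{\lambda_n})$. An ideal is normal if all its positive powers are integrally closed. *)

theory Defs
  imports Main "HOL-Library.Poly_Mapping" "HOL-Library.Cardinality"
begin

definition ideal_gen :: "'a::comm_ring_1 set \<Rightarrow> 'a set" where
  "ideal_gen S = {x. \<exists>F c. finite F \<and> F \<subseteq> S \<and> x = (\<Sum>s\<in>F. c s * s)}"

definition ideal_prod :: "'a::comm_ring_1 set \<Rightarrow> 'a set \<Rightarrow> 'a set" where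
  "ideal_prod I J = ideal_gen {a * b | a b. a \<in> I \<and> b \<in> J}"

fun ideal_pow :: "'a::comm_ring_1 set \<Rightarrow> nat \<Rightarrow> 'a set" where
  "ideal_pow I 0 = UNIV"
| "ideal_pow I (Suc k) = ideal_prod I (ideal_pow I k)"

definition integral_over_ideal :: "'a::comm_ring_1 set \<Rightarrow> 'a \<Rightarrow> bool" where
  "integral_over_ideal I x \<longleftrightarrow>
     (\<exists>m a. m \<ge> 1 \<and> (\<forall>i\<in>{1..m}. a i \<in> ideal_pow I i) \<and>
            x ^ m + (\<Sum>i=1..m. a i * x ^ (m - i)) = 0)"

definition integral_closure_ideal :: "'a::comm_ring_1 set \<Rightarrow> 'a set" where
  "integral_closure_ideal I = {x. integral_over_ideal I x}"

definition normal_ideal :: "'a::comm_ring_1 set \<Rightarrow> bool" where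
  "normal_ideal I \<longleftrightarrow>
     (\<forall>k\<ge>1. integral_closure_ideal (ideal_pow I k) = ideal_pow I k)"

text \<open>Polynomial ring K[x_i : i :: 'n] as finitely supported functions from
  monomials (finitely supported exponent vectors) to coefficients.\<close>
type_synonym ('n, 'k) mpoly = "('n \<Rightarrow>\<^sub>0 nat) \<Rightarrow>\<^sub>0 'k"

definition var :: "'n \<Rightarrow> ('n, 'k::comm_ring_1) mpoly" where
  "var i = Poly_Mapping.single (Poly_Mapping.single i 1) 1"

definition I_lambda :: "('n \<Rightarrow> nat) \<Rightarrow> ('n, 'k::field) mpoly set" where
  "I_lambda lam = integral_closure_ideal (ideal_gen (range (\<lambda>i. var i ^ lam i)))"

end

theory Submission
  imports Defs
begin

lemma ideal_gen_sup: "s \<in> S \<Longrightarrow> s \<in> ideal_gen S"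
  unfolding ideal_gen_def
  by (rule CollectI, rule exI[of _ "{s}"], rule exI[of _ "\<lambda>_. 1"]) simp

lemma ideal_gen_0: "0 \<in> ideal_gen S"
  unfolding ideal_gen_def by (rule CollectI, rule exI[of _ "{}"]) simp

lemma ideal_gen_add:
  assumes "x \<in> ideal_gen S" "y \<in> ideal_gen S" shows "x + y \<in> ideal_gen S"
proof -
  obtain F1 c1 where 1: "finite F1" "F1 \<subseteq> S" "x = (\<Sum>s\<in>F1. c1 s * s)"
    using assms(1) unfolding ideal_gen_def by blast
  obtain F2 c2 where 2: "finite F2" "F2 \<subseteq> S" "y = (\<Sum>s\<in>F2. c2 s * s)"
    using assms(2) unfolding ideal_gen_def by blast
  define c where "c s = (if s \<in> F1 then c1 s else 0) + (if s \<in> F2 then c2 s else 0)" for s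
  have f: "finite (F1 \<union> F2)" using 1 2 by simp
  have A: "(\<Sum>s\<in>F1 \<union> F2. c s * s) = (\<Sum>s\<in>F1 \<union> F2. (if s \<in> F1 then c1 s * s else 0))
     + (\<Sum>s\<in>F1 \<union> F2. (if s \<in> F2 then c2 s * s else 0))"
    unfolding sum.distrib[symmetric] by (rule sum.cong) (auto simp: c_def distrib_right)
  have B: "(\<Sum>s\<in>F1 \<union> F2. (if s \<in> F1 then c1 s * s else 0)) = (\<Sum>s\<in>(F1 \<union> F2) \<inter> F1. c1 s * s)"
      by (rule sum.inter_restrict[OF f, symmetric])
  have C: "(\<Sum>s\<in>F1 \<union> F2. (if s \<in> F2 then c2 s * s else 0)) = (\<Sum>s\<in>(F1 \<union> F2) \<inter> F2. c2 s * s)"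
      by (rule sum.inter_restrict[OF f, symmetric])
  have D: "(F1 \<union> F2) \<inter> F1 = F1" "(F1 \<union> F2) \<inter> F2 = F2" by auto
  have eq: "x + y = (\<Sum>s\<in>F1 \<union> F2. c s * s)" unfolding A B C D 1(3) 2(3) ..
  have fs: "F1 \<union> F2 \<subseteq> S" using 1 2 by auto
  show ?thesis using f fs eq unfolding ideal_gen_def by blast
qed

lemma ideal_gen_mult:
  assumes "x \<in> ideal_gen S" shows "r * x \<in> ideal_gen S"
proof -
  obtain F c where 1: "finite F" "F \<subseteq> S" "x = (\<Sum>s\<in>F. c s * s)"
    using assms(1) unfolding ideal_gen_def by blast
  have "r * x = (\<Sum>s\<in>F. (r * c s) * s)" using 1 by (simp add: sum_distrib_left mult.assoc)
  then show ?thesis using 1 unfolding ideal_gen_def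
    by (intro CollectI exI[of _ F] exI[of _ "\<lambda>s. r * c s"]) simp
qed

lemma ideal_gen_uminus: "x \<in> ideal_gen S \<Longrightarrow> - x \<in> ideal_gen S"
  using ideal_gen_mult[of x S "-1"] by simp

lemma ideal_gen_least:
  assumes "S \<subseteq> A" "0 \<in> A" "\<And>x y. x \<in> A \<Longrightarrow> y \<in> A \<Longrightarrow> x + y \<in> A"
    "\<And>r x. x \<in> A \<Longrightarrow> r * x \<in> A"
  shows "ideal_gen S \<subseteq> A"
proof
  fix x assume "x \<in> ideal_gen S"
  then obtain F c where 1: "finite F" "F \<subseteq> S" "x = (\<Sum>s\<in>F. c s * s)"
    unfolding ideal_gen_def by blast
  have "(\<Sum>s\<in>F. c s * s) \<in> A" using 1(1,2)
    by (induction F rule: finite_induct) (use assms in auto)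
  then show "x \<in> A" using 1 by simp
qed

lemma ideal_prod_mem: "a \<in> I \<Longrightarrow> b \<in> J \<Longrightarrow> a * b \<in> ideal_prod I J"
  unfolding ideal_prod_def by (rule ideal_gen_sup) blast

lemma ideal_pow_0: "0 \<in> ideal_pow I k"
  by (cases k) (auto simp: ideal_prod_def ideal_gen_0)

lemma ideal_pow_add: "x \<in> ideal_pow I k \<Longrightarrow> y \<in> ideal_pow I k \<Longrightarrow> x + y \<in> ideal_pow I k"
  by (cases k) (auto simp: ideal_prod_def ideal_gen_add)

lemma ideal_pow_mult: "x \<in> ideal_pow I k \<Longrightarrow> r * x \<in> ideal_pow I k"
  by (cases k) (auto simp: ideal_prod_def ideal_gen_mult)

lemma ideal_pow_uminus: "x \<in> ideal_pow I k \<Longrightarrow> - x \<in> ideal_pow I k"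
  using ideal_pow_mult[of x I k "-1"] by simp

lemma ideal_pow_sum: "finite F \<Longrightarrow> (\<And>s. s \<in> F \<Longrightarrow> g s \<in> ideal_pow I k) \<Longrightarrow> sum g F \<in> ideal_pow I k"
  by (induction F rule: finite_induct) (auto intro: ideal_pow_add ideal_pow_0)

lemma closure_superset: "k \<ge> 1 \<Longrightarrow> ideal_pow I k \<subseteq> integral_closure_ideal (ideal_pow I k)"
proof
  fix x assume k: "k \<ge> 1" and x: "x \<in> ideal_pow I k"
  have "integral_over_ideal (ideal_pow I k) x"
    unfolding integral_over_ideal_def
    apply (rule exI[of _ 1], rule exI[of _ "\<lambda>_. - x"])
    using ideal_prod_mem[OF ideal_pow_uminus[OF x], of 1 UNIV] by simp
  then show "x \<in> integral_closure_ideal (ideal_pow I k)" by (simp add: integral_closure_ideal_def)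
qed

abbreviation "lk \<equiv> Poly_Mapping.lookup"
abbreviation "sng \<equiv> Poly_Mapping.single"
abbreviation "kys \<equiv> Poly_Mapping.keys"

lemma pm_sum_single: "(\<Sum>a\<in>kys p. sng a (lk p a)) = p"
proof (rule poly_mapping_eqI)
  fix k
  have "(\<Sum>a\<in>kys p. lk (sng a (lk p a)) k) = (\<Sum>a\<in>kys p. if a = k then lk p a else 0)"
    by (rule sum.cong) (auto simp: lookup_single when_def)
  also have "\<dots> = lk p k" by (simp add: in_keys_iff)
  finally show "lk (\<Sum>a\<in>kys p. sng a (lk p a)) k = lk p k" by (simp add: lookup_sum)
qed

lemma lookup_mult_keys:
  fixes p q :: "('m::comm_monoid_add) \<Rightarrow>\<^sub>0 ('k::comm_semiring_1)"
  shows "lk (p * q) k = (\<Sum>a\<in>kys p. \<Sum>b\<in>kys q. if k = a + b then lk p a * lk q b else 0)"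
proof -
  have "p * q = (\<Sum>a\<in>kys p. sng a (lk p a)) * (\<Sum>b\<in>kys q. sng b (lk q b))"
    by (simp add: pm_sum_single)
  also have "\<dots> = (\<Sum>a\<in>kys p. \<Sum>b\<in>kys q. sng (a + b) (lk p a * lk q b))"
    by (simp add: sum_product mult_single)
  finally show ?thesis
    by (simp add: lookup_sum lookup_single when_def eq_commute)
qed

lemma lowest_mult:
  fixes \<phi> :: "'m::cancel_comm_monoid_add \<Rightarrow> 'o::{ordered_cancel_comm_monoid_add, linorder}"
    and p q :: "'m \<Rightarrow>\<^sub>0 'k::comm_semiring_1"
  assumes inj: "inj \<phi>" and add: "\<And>x y. \<phi> (x + y) = \<phi> x + \<phi> y"
    and pa: "\<forall>a\<in>kys p. \<phi> ao \<le> \<phi> a" and qb: "\<forall>b\<in>kys q. \<phi> bo \<le> \<phi> b"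
  shows "lk (p * q) (ao + bo) = lk p ao * lk q bo"
    and "\<forall>c\<in>kys (p * q). \<phi> (ao + bo) \<le> \<phi> c"
proof -
  have key: "a = ao \<and> b = bo" if "a \<in> kys p" "b \<in> kys q" "ao + bo = a + b" for a b
  proof -
    have 1: "\<phi> ao \<le> \<phi> a" "\<phi> bo \<le> \<phi> b" using pa qb that by auto
    have 2: "\<phi> ao + \<phi> bo = \<phi> a + \<phi> b" using that(3) add by metis
    have "\<phi> a = \<phi> ao"
    proof (rule ccontr)
      assume "\<phi> a \<noteq> \<phi> ao"
      then have "\<phi> ao < \<phi> a" using 1 by auto
      then have "\<phi> ao + \<phi> bo < \<phi> a + \<phi> b" using 1(2) by (rule add_less_le_mono)
      then show False using 2 by simp
    qed
    then have "a = ao" using inj by (simp add: inj_eq)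
    then show ?thesis using that(3) by simp
  qed
  have "lk (p * q) (ao + bo) = (\<Sum>a\<in>kys p. \<Sum>b\<in>kys q.
        if a = ao then (if b = bo then lk p a * lk q b else 0) else 0)"
    unfolding lookup_mult_keys
    by (rule sum.cong[OF refl], rule sum.cong[OF refl]) (use key in auto)
  also have "\<dots> = (\<Sum>a\<in>kys p. if a = ao then (\<Sum>b\<in>kys q. if b = bo then lk p a * lk q b else 0) else 0)"
    by (rule sum.cong) auto
  also have "\<dots> = (\<Sum>a\<in>kys p. if a = ao then lk p a * lk q bo else 0)"
    by (rule sum.cong) (auto simp: in_keys_iff)
  also have "\<dots> = lk p ao * lk q bo"
    by (auto simp: in_keys_iff)
  finally show "lk (p * q) (ao + bo) = lk p ao * lk q bo" .
  show "\<forall>c\<in>kys (p * q). \<phi> (ao + bo) \<le> \<phi> c"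
  proof
    fix c assume "c \<in> kys (p * q)"
    then obtain a b where "a \<in> kys p" "b \<in> kys q" "c = a + b" using keys_mult by blast
    then show "\<phi> (ao + bo) \<le> \<phi> c" using pa qb add by (simp add: add_mono)
  qed
qed

fun rep :: "nat \<Rightarrow> 'm \<Rightarrow> 'm::monoid_add" where
  "rep 0 a = 0"
| "rep (Suc m) a = a + rep m a"

lemma lowest_pow:
  fixes \<phi> :: "'m::cancel_comm_monoid_add \<Rightarrow> 'o::{ordered_cancel_comm_monoid_add, linorder}"
    and p :: "'m \<Rightarrow>\<^sub>0 'k::comm_semiring_1"
  assumes inj: "inj \<phi>" and add: "\<And>x y. \<phi> (x + y) = \<phi> x + \<phi> y"
    and pa: "\<forall>a\<in>kys p. \<phi> ao \<le> \<phi> a"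
  shows "lk (p ^ m) (rep m ao) = lk p ao ^ m \<and> (\<forall>c\<in>kys (p ^ m). \<phi> (rep m ao) \<le> \<phi> c)"
proof (induction m)
  case 0
  show ?case by (simp add: lookup_one)
next
  case (Suc m)
  then show ?case
    using lowest_mult[OF inj add pa, where bo = "rep m ao" and q = "p ^ m"] by simp
qed

definition wt :: "('n::finite \<Rightarrow> nat) \<Rightarrow> ('n \<Rightarrow>\<^sub>0 nat) \<Rightarrow> nat" where
  "wt w a = (\<Sum>i\<in>UNIV. lk a i * w i)"

lemma wt_add: "wt w (a + b) = wt w a + wt w b"
  by (simp add: wt_def lookup_add sum.distrib add_mult_distrib)

lemma wt_zero[simp]: "wt w 0 = 0"
  by (simp add: wt_def)

lemma wt_rep: "wt w (rep m a) = m * wt w a"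
  by (induction m) (simp_all add: wt_add)

lemma lookup_rep: "lk (rep m a) i = m * lk a i"
  by (induction m) (simp_all add: lookup_add)

lemma wt_single: "wt w (sng i c) = c * w i"
proof -
  have "wt w (sng i c) = (\<Sum>j\<in>UNIV. if j = i then c * w j else 0)"
    unfolding wt_def by (rule sum.cong) (auto simp: lookup_single when_def)
  then show ?thesis by simp
qed

definition WW :: "('n::finite \<Rightarrow> nat) \<Rightarrow> nat \<Rightarrow> ('n, 'k::field) mpoly set" where
  "WW w t = {f. \<forall>a\<in>kys f. t \<le> wt w a}"

lemma WW_0: "0 \<in> WW w t"
  by (simp add: WW_def)

lemma WW_add:
  assumes f: "f \<in> WW w t" and g: "g \<in> WW w t" shows "f + g \<in> WW w t"
proof -
  have "t \<le> wt w a" if "a \<in> kys (f + g)" for a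
  proof -
    have "a \<in> kys f \<union> kys g" using that keys_add by fast
    then show ?thesis using f g unfolding WW_def by blast
  qed
  then show ?thesis unfolding WW_def by blast
qed

lemma WW_uminus: "f \<in> WW w t \<Longrightarrow> - f \<in> WW w t"
  unfolding WW_def by (simp add: keys_minus)

lemma WW_mult: "f \<in> WW w s \<Longrightarrow> g \<in> WW w t \<Longrightarrow> f * g \<in> WW w (s + t)"
proof -
  assume f: "f \<in> WW w s" and g: "g \<in> WW w t"
  show ?thesis unfolding WW_def
  proof
    show "\<forall>c\<in>kys (f * g). s + t \<le> wt w c"
    proof
      fix c assume "c \<in> kys (f * g)"
      then obtain a b where "a \<in> kys f" "b \<in> kys g" "c = a + b" using keys_mult by blast
      moreover have "s \<le> wt w a" "t \<le> wt w b" using f g \<open>a \<in> kys f\<close> \<open>b \<in> kys g\<close>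
        unfolding WW_def by blast+
      ultimately show "s + t \<le> wt w c" by (simp add: wt_add)
    qed
  qed
qed

lemma WW_univ: "WW w 0 = UNIV"
  by (simp add: WW_def)

lemma WW_mono: "s \<le> t \<Longrightarrow> WW w t \<subseteq> WW w s"
  unfolding WW_def by auto

lemma WW_multl: "g \<in> WW w t \<Longrightarrow> r * g \<in> WW w t"
  using WW_mult[of r w 0 g t] by (simp add: WW_univ)

lemma WW_pow: "f \<in> WW w s \<Longrightarrow> f ^ j \<in> WW w (j * s)"
proof (induction j)
  case 0 then show ?case by (simp add: WW_univ)
next
  case (Suc j) then show ?case using WW_mult[of f w s "f ^ j" "j * s"] by simp
qed

lemma WW_sum: "finite F \<Longrightarrow> (\<And>s. s \<in> F \<Longrightarrow> g s \<in> WW w t) \<Longrightarrow> sum g F \<in> WW w t"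
  by (induction F rule: finite_induct) (auto intro: WW_add WW_0)

lemma ideal_gen_WW: "S \<subseteq> WW w t \<Longrightarrow> ideal_gen S \<subseteq> WW w t"
  by (rule ideal_gen_least[OF _ WW_0 WW_add WW_multl])

lemma ideal_pow_WW: "X \<subseteq> WW w t \<Longrightarrow> ideal_pow X i \<subseteq> WW w (i * t)"
proof (induction i)
  case 0 then show ?case by (simp add: WW_univ)
next
  case (Suc i)
  have "{a * b |a b. a \<in> X \<and> b \<in> ideal_pow X i} \<subseteq> WW w (t + i * t)"
  proof (rule subsetI)
    fix z assume "z \<in> {a * b |a b. a \<in> X \<and> b \<in> ideal_pow X i}"
    then obtain a b where z: "z = a * b" "a \<in> X" "b \<in> ideal_pow X i" by blast
    have "a \<in> WW w t" using z(2) Suc.prems by (rule subsetD[rotated])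
    moreover have "b \<in> WW w (i * t)" using z(3) Suc.IH[OF Suc.prems] by (rule subsetD[rotated])
    ultimately show "z \<in> WW w (t + i * t)" unfolding z(1) by (rule WW_mult)
  qed
  then have "ideal_gen {a * b |a b. a \<in> X \<and> b \<in> ideal_pow X i} \<subseteq> WW w (t + i * t)"
    by (rule ideal_gen_WW)
  then show ?case by (simp add: ideal_prod_def)
qed

text \<open>A total order on monomials refining the weight.\<close>

definition phi :: "('n::finite \<Rightarrow> nat) \<Rightarrow> ('n \<Rightarrow> nat) \<Rightarrow> ('n \<Rightarrow>\<^sub>0 nat) \<Rightarrow> (nat \<Rightarrow>\<^sub>0 nat)" where
  "phi w h a = Abs_poly_mapping (\<lambda>k. if k = 0 then wt w a
      else if k - 1 \<in> range h then lk a (inv h (k - 1)) else 0)"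

lemma lookup_phi: "lk (phi w h a) = (\<lambda>k. if k = 0 then wt w a
      else if k - 1 \<in> range h then lk a (inv h (k - 1)) else 0)"
proof -
  define F where "F = (\<lambda>k. if k = 0 then wt w a
      else if k - 1 \<in> range h then lk a (inv h (k - 1)) else 0)"
  have "{k. F k \<noteq> 0} \<subseteq> insert 0 (Suc ` range h)"
  proof
    fix k assume "k \<in> {k. F k \<noteq> 0}"
    then have "F k \<noteq> 0" by simp
    show "k \<in> insert 0 (Suc ` range h)"
    proof (cases "k = 0")
      case False
      then have "k - 1 \<in> range h" using \<open>F k \<noteq> 0\<close> unfolding F_def by (simp split: if_splits)
      moreover have "k = Suc (k - 1)" using False by simp
      ultimately show ?thesis by blast
    qed simp
  qed
  moreover have "finite (insert 0 (Suc ` range h))" by simp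
  ultimately have "finite {k. F k \<noteq> 0}" by (rule finite_subset)
  then have "lk (Abs_poly_mapping F) = F" by (rule lookup_Abs_poly_mapping)
  then show ?thesis unfolding phi_def F_def by simp
qed

lemma phi_add: "phi w h (a + b) = phi w h a + phi w h b"
  by (rule poly_mapping_eqI) (simp add: lookup_phi lookup_add wt_add)

lemma phi_inj: "inj h \<Longrightarrow> inj (phi w h)"
proof (rule injI)
  fix a b assume h: "inj h" and e: "phi w h a = phi w h b"
  show "a = b"
  proof (rule poly_mapping_eqI)
    fix i
    have 1: "lk (phi w h a) (Suc (h i)) = lk (phi w h b) (Suc (h i))" using e by simp
    have 2: "lk (phi w h c) (Suc (h i)) = lk c i" for c
    proof -
      have "Suc (h i) - 1 \<in> range h" by simp
      moreover have "inv h (Suc (h i) - 1) = i" using h by simp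
      ultimately show ?thesis unfolding lookup_phi by simp
    qed
    show "lk a i = lk b i" using 1 unfolding 2 .
  qed
qed

lemma phi_wt: "phi w h a \<le> phi w h b \<Longrightarrow> wt w a \<le> wt w b"
proof (rule ccontr)
  assume 1: "phi w h a \<le> phi w h b" and "\<not> wt w a \<le> wt w b"
  then have "wt w b < wt w a" by simp
  then have "lk (phi w h b) 0 < lk (phi w h a) 0" by (simp add: lookup_phi)
  then have "less_fun (lk (phi w h b)) (lk (phi w h a))"
    unfolding less_fun_def by (intro exI[of _ 0]) simp
  then have "phi w h b < phi w h a" by (simp add: less_poly_mapping.rep_eq)
  then show False using 1 by simp
qed

lemma val_lemma:
  fixes X :: "('n::finite, 'k::field) mpoly set"
  assumes XP: "\<And>i. i \<ge> 1 \<Longrightarrow> ideal_pow X i \<subseteq> WW w (i * t)"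
    and ix: "integral_over_ideal X x"
  shows "x \<in> WW w t"
proof (rule ccontr)
  assume nx: "x \<notin> WW w t"
  obtain m a where m: "m \<ge> 1" and am: "\<forall>i\<in>{1..m}. a i \<in> ideal_pow X i"
    and eq: "x ^ m + (\<Sum>i=1..m. a i * x ^ (m - i)) = 0"
    using ix unfolding integral_over_ideal_def by blast
  obtain bad where bad: "bad \<in> kys x" "wt w bad < t" using nx unfolding WW_def by (auto simp: not_le)
  obtain h :: "'n \<Rightarrow> nat" and N where "h ` UNIV = {..<N}" "inj_on h UNIV"
    using finite_imp_inj_to_nat_seg[OF finite_class.finite_UNIV] by blast
  then have h: "inj h" by simp
  define P where "P = phi w h"
  have Pinj: "inj P" using phi_inj[OF h] P_def by simp
  have Padd: "\<And>x y. P (x + y) = P x + P y" by (simp add: P_def phi_add)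
  have fin: "finite (P ` kys x)" "P ` kys x \<noteq> {}" using bad by auto
  obtain ao where ao: "ao \<in> kys x" "P ao = Min (P ` kys x)" using Min_in[OF fin] by auto
  have aomin: "\<forall>a\<in>kys x. P ao \<le> P a" using ao fin by simp
  define v where "v = wt w ao"
  have "wt w ao \<le> wt w bad" using aomin bad(1) unfolding P_def by (blast intro: phi_wt)
  then have vlt: "v + 1 \<le> t" using bad(2) v_def by simp
  have xv: "x \<in> WW w v" unfolding WW_def v_def using aomin unfolding P_def by (blast intro: phi_wt)
  have low: "lk (x ^ m) (rep m ao) = lk x ao ^ m"
    using lowest_pow[OF Pinj Padd aomin, of m] by simp
  have "lk x ao \<noteq> 0" using ao(1) by (simp add: in_keys_iff)
  then have "lk (x ^ m) (rep m ao) \<noteq> 0" using low by simp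
  then have key: "rep m ao \<in> kys (x ^ m)" by (simp add: in_keys_iff)
  have wkey: "wt w (rep m ao) = m * v" by (simp add: wt_rep v_def)
  have xm: "x ^ m = - (\<Sum>i=1..m. a i * x ^ (m - i))"
    using eq by (simp add: eq_neg_iff_add_eq_0)
  have "(\<Sum>i=1..m. a i * x ^ (m - i)) \<in> WW w (m * v + 1)"
  proof (rule WW_sum)
    fix i assume i: "i \<in> {1..m}"
    have "a i \<in> WW w (i * t)" using am i XP[of i] by auto
    moreover have "x ^ (m - i) \<in> WW w ((m - i) * v)" using xv by (rule WW_pow)
    ultimately have 1: "a i * x ^ (m - i) \<in> WW w (i * t + (m - i) * v)" by (rule WW_mult)
    have "i * (v + 1) \<le> i * t" using vlt by (rule mult_le_mono2)
    moreover have "i * v + (m - i) * v = m * v" using i by (simp add: add_mult_distrib[symmetric])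
    moreover have "i \<ge> 1" using i by simp
    ultimately have "m * v + 1 \<le> i * t + (m - i) * v" by (simp add: algebra_simps)
    then show "a i * x ^ (m - i) \<in> WW w (m * v + 1)" using 1 WW_mono by blast
  qed simp
  then have "x ^ m \<in> WW w (m * v + 1)" unfolding xm by (rule WW_uminus)
  then have "m * v + 1 \<le> wt w (rep m ao)" using key unfolding WW_def by blast
  then show False using wkey by simp
qed

lemma fin_n: "finite (A :: 'n::finite set)"
  by (rule finite_subset[OF subset_UNIV finite_class.finite_UNIV])

lemma mono_pow: "(sng a (1::'k::comm_semiring_1)) ^ n = sng (rep n a) 1"
  by (induction n) (simp_all add: mult_single)

lemma rep_single: "rep e (sng i (1::nat)) = sng i e"
  by (rule poly_mapping_eqI) (simp add: lookup_rep lookup_single when_def)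

lemma var_pow: "(var i :: ('n, 'k::comm_ring_1) mpoly) ^ e = sng (sng i e) 1"
  unfolding var_def mono_pow rep_single ..

lemma var_WW: "(var i :: ('n::finite, 'k::field) mpoly) \<in> WW w (w i)"
  unfolding WW_def var_def by (simp add: wt_single)

lemma J_WW:
  assumes hw: "\<And>i. lam i * w i = T"
  shows "ideal_gen (range (\<lambda>i. var i ^ lam i)) \<subseteq> (WW w T :: ('n::finite, 'k::field) mpoly set)"
proof (rule ideal_gen_WW, rule subsetI)
  fix z assume "z \<in> range (\<lambda>i. (var i :: ('n, 'k) mpoly) ^ lam i)"
  then obtain i where z: "z = var i ^ lam i" by blast
  have "z \<in> WW w (lam i * w i)" unfolding z by (rule WW_pow[OF var_WW])
  then show "z \<in> WW w T" using hw by simp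
qed

lemma I_WW:
  assumes hw: "\<And>i. lam i * w i = T"
  shows "integral_closure_ideal (ideal_gen (range (\<lambda>i. var i ^ lam i))) \<subseteq> (WW w T :: ('n::finite, 'k::field) mpoly set)"
proof (rule subsetI)
  fix x :: "('n, 'k) mpoly"
  assume "x \<in> integral_closure_ideal (ideal_gen (range (\<lambda>i. var i ^ lam i)))"
  then have ix: "integral_over_ideal (ideal_gen (range (\<lambda>i. var i ^ lam i))) x"
    by (simp add: integral_closure_ideal_def)
  show "x \<in> WW w T"
    by (rule val_lemma[OF ideal_pow_WW[OF J_WW[OF hw]] ix])
qed

lemma closure_Ipow_WW:
  fixes I :: "('n::finite, 'k::field) mpoly set"
  assumes "I \<subseteq> WW w T"
  shows "integral_closure_ideal (ideal_pow I k) \<subseteq> WW w (k * T)"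
proof (rule subsetI)
  fix x assume "x \<in> integral_closure_ideal (ideal_pow I k)"
  then have ix: "integral_over_ideal (ideal_pow I k) x"
    by (simp add: integral_closure_ideal_def)
  have "ideal_pow I k \<subseteq> WW w (k * T)" by (rule ideal_pow_WW[OF assms])
  show "x \<in> WW w (k * T)"
    by (rule val_lemma[OF ideal_pow_WW[OF ideal_pow_WW[OF assms]] ix])
qed

lemma mono_in_Jpow:
  fixes lam :: "'n::finite \<Rightarrow> nat"
  shows "\<forall>e q. m \<le> sum q UNIV \<and> (\<forall>i. lam i * q i \<le> lk e i) \<longrightarrow>
    (sng e 1 :: ('n, 'k::field) mpoly) \<in> ideal_pow (ideal_gen (range (\<lambda>i. var i ^ lam i))) m"
proof (induction m)
  case 0 then show ?case by simp
next
  case (Suc m)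
  show ?case
  proof (intro allI impI, elim conjE)
    fix e q assume sq: "Suc m \<le> sum q UNIV" and le: "\<forall>i. lam i * q i \<le> lk e i"
    obtain j where j: "q j \<ge> 1"
    proof (cases "\<exists>j. q j \<ge> 1")
      case False
      have "\<forall>i. q i = 0"
      proof
        fix i have "\<not> 1 \<le> q i" using False by blast
        then show "q i = 0" by simp
      qed
      then have "sum q UNIV = 0" by simp
      then show ?thesis using sq by simp
    qed auto
    define q' where "q' = q(j := q j - 1)"
    have "sum q UNIV = q j + sum q (UNIV - {j})" by (rule sum.remove) (simp_all add: fin_n)
    moreover have "sum q' UNIV = q' j + sum q' (UNIV - {j})" by (rule sum.remove) (simp_all add: fin_n)
    moreover have "sum q' (UNIV - {j}) = sum q (UNIV - {j})" unfolding q'_def by (rule sum.cong) auto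
    ultimately have sq': "m \<le> sum q' UNIV" using sq j unfolding q'_def by simp
    define e' where "e' = Abs_poly_mapping (\<lambda>i. lk e i - (if i = j then lam j else 0))"
    have le': "lk e' = (\<lambda>i. lk e i - (if i = j then lam j else 0))"
      unfolding e'_def by (rule lookup_Abs_poly_mapping) (simp add: fin_n)
    have ljq: "lam j * q j \<le> lk e j" using le by simp
    have ljle: "lam j \<le> lk e j" using ljq j by (metis le_trans mult.right_neutral mult_le_mono2)
    have eeq: "e = sng j (lam j) + e'"
      by (rule poly_mapping_eqI) (use ljle in \<open>simp add: lookup_add lookup_single when_def le'\<close>)
    have le2: "\<forall>i. lam i * q' i \<le> lk e' i"
    proof
      fix i show "lam i * q' i \<le> lk e' i"
      proof (cases "i = j")
        case True
        have "lam j * (q j - 1) = lam j * q j - lam j" by (simp add: diff_mult_distrib2)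
        then show ?thesis using True ljq by (simp add: q'_def le')
      next
        case False then show ?thesis using le by (simp add: q'_def le')
      qed
    qed
    have IH: "(sng e' 1 :: ('n, 'k) mpoly) \<in> ideal_pow (ideal_gen (range (\<lambda>i. var i ^ lam i))) m"
      using Suc.IH sq' le2 by blast
    have V: "(var j ^ lam j :: ('n, 'k) mpoly) \<in> ideal_gen (range (\<lambda>i. var i ^ lam i))"
      by (rule ideal_gen_sup) simp
    have "(sng e 1 :: ('n, 'k) mpoly) = var j ^ lam j * sng e' 1"
      by (simp add: var_pow mult_single eeq)
    then show "(sng e 1 :: ('n, 'k) mpoly) \<in> ideal_pow (ideal_gen (range (\<lambda>i. var i ^ lam i))) (Suc m)"
      using ideal_prod_mem[OF V IH] by simp
  qed
qed

lemma mono_in_I: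
  fixes lam :: "'n::finite \<Rightarrow> nat"
  assumes hw: "\<And>i. lam i * w i = T" and T: "T \<ge> 1" and b: "T \<le> wt w b"
  shows "(sng b 1 :: ('n, 'k::field) mpoly) \<in> integral_closure_ideal (ideal_gen (range (\<lambda>i. var i ^ lam i)))"
proof -
  define J where "J = (ideal_gen (range (\<lambda>i. var i ^ lam i)) :: ('n, 'k) mpoly set)"
  define x where "x = (sng b 1 :: ('n, 'k) mpoly)"
  define a where "a = (\<lambda>i::nat. if i = T then - (x ^ T) else 0)"
  have xT: "x ^ T = sng (rep T b) 1" unfolding x_def by (rule mono_pow)
  have "x ^ T \<in> ideal_pow J T"
  proof -
    define q where "q i = w i * lk b i" for i
    have "sum q UNIV = wt w b" unfolding q_def wt_def by (simp add: mult.commute)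
    moreover have "\<forall>i. lam i * q i \<le> lk (rep T b) i"
      unfolding q_def lookup_rep by (simp add: mult.assoc[symmetric] hw)
    ultimately have "T \<le> sum q UNIV \<and> (\<forall>i. lam i * q i \<le> lk (rep T b) i)" using b by simp
    then have "(sng (rep T b) 1 :: ('n, 'k) mpoly) \<in> ideal_pow (ideal_gen (range (\<lambda>i. var i ^ lam i))) T"
      using mono_in_Jpow[of T lam] by blast
    then show ?thesis unfolding xT J_def .
  qed
  then have A: "\<forall>i\<in>{1..T}. a i \<in> ideal_pow J i"
    unfolding a_def by (auto intro: ideal_pow_uminus ideal_pow_0)
  have "(\<Sum>i=1..T. a i * x ^ (T - i)) = (\<Sum>i=1..T. if i = T then - (x ^ T) else 0)"
    by (rule sum.cong) (auto simp: a_def)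
  also have "\<dots> = - (x ^ T)" using T by simp
  finally have B: "x ^ T + (\<Sum>i=1..T. a i * x ^ (T - i)) = 0" by simp
  have "integral_over_ideal J x"
    unfolding integral_over_ideal_def using T A B by blast
  then show ?thesis unfolding J_def x_def integral_closure_ideal_def by simp
qed

lemma pick:
  assumes "finite A" shows "d \<le> sum s A \<Longrightarrow> \<exists>c. (\<forall>i. c i \<le> (s i :: nat)) \<and> sum c A = d"
  using assms
proof (induction A arbitrary: d rule: finite_induct)
  case empty
  then show ?case by (intro exI[of _ "\<lambda>_. 0"]) simp
next
  case (insert x A)
  show ?case
  proof (cases "d \<le> sum s A")
    case True
    then obtain c where c: "\<forall>i. c i \<le> s i" "sum c A = d" using insert.IH by blast
    have "sum (c(x := 0)) A = sum c A" using insert.hyps by (intro sum.cong) auto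
    then have "sum (c(x := 0)) (insert x A) = d" using insert.hyps c by simp
    moreover have "\<forall>i. (c(x := 0)) i \<le> s i" using c by simp
    ultimately show ?thesis by blast
  next
    case False
    define c where "c = s(x := d - sum s A)"
    have "sum c A = sum s A" using insert.hyps unfolding c_def by (intro sum.cong) auto
    then have "sum c (insert x A) = d" using insert.hyps False unfolding c_def by simp
    moreover have "\<forall>i. c i \<le> s i" using insert.prems insert.hyps unfolding c_def by simp
    ultimately show ?thesis by blast
  qed
qed

lemma split_mono:
  fixes a :: "'n::finite \<Rightarrow>\<^sub>0 nat"
  assumes mu: "\<And>i. \<mu> i > 0" and wm: "\<And>i. w i * \<mu> i = M" and M: "M > 0"
    and dn: "CARD('n) \<le> d + 1" and big: "2 * (d * M) \<le> wt w a"
  shows "\<exists>b r. a = b + r \<and> wt w b = d * M"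
proof -
  define s where "s i = lk a i div \<mu> i" for i
  have each: "lk a i * w i + 1 \<le> (s i + 1) * M" for i
  proof -
    have "lk a i < (s i + 1) * \<mu> i"
      unfolding s_def using mu[of i]
      by (metis add.commute div_mult_mod_eq mod_less_divisor mult_Suc nat_add_left_cancel_less plus_1_eq_Suc)
    then have "lk a i * w i < (s i + 1) * \<mu> i * w i"
      using M wm[of i] by (intro mult_strict_right_mono) (auto intro!: Nat.gr0I)
    also have "\<dots> = (s i + 1) * (w i * \<mu> i)" by (simp only: ac_simps)
    also have "\<dots> = (s i + 1) * M" using wm[of i] by simp
    finally show ?thesis by simp
  qed
  have "wt w a + CARD('n) = (\<Sum>i\<in>UNIV. lk a i * w i + 1)"
    unfolding wt_def sum.distrib by simp
  also have "\<dots> \<le> (\<Sum>i\<in>UNIV. (s i + 1) * M)" by (rule sum_mono) (rule each)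
  also have "\<dots> = (sum s UNIV + CARD('n)) * M" by (simp add: sum_distrib_right sum_distrib_left sum.distrib algebra_simps)
  finally have ineq: "wt w a + CARD('n) \<le> (sum s UNIV + CARD('n)) * M" .
  have ds: "d \<le> sum s UNIV"
  proof (rule ccontr)
    assume "\<not> d \<le> sum s UNIV"
    then have "sum s UNIV + CARD('n) \<le> 2 * d" using dn by simp
    then have "(sum s UNIV + CARD('n)) * M \<le> 2 * d * M" by (rule mult_le_mono1)
    then have "wt w a + CARD('n) \<le> 2 * d * M" by (rule order.trans[OF ineq])
    then have "wt w a + CARD('n) \<le> 2 * (d * M)" by (simp only: mult.assoc)
    moreover have "CARD('n) > 0" by simp
    ultimately show False using big by linarith
  qed
  obtain c where c: "\<forall>i. c i \<le> s i" "sum c UNIV = d" using pick[OF fin_n ds] by blast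
  define b where "b = Abs_poly_mapping (\<lambda>i. c i * \<mu> i)"
  define r where "r = Abs_poly_mapping (\<lambda>i. lk a i - c i * \<mu> i)"
  have lb: "lk b = (\<lambda>i. c i * \<mu> i)" unfolding b_def by (rule lookup_Abs_poly_mapping) (simp add: fin_n)
  have lr: "lk r = (\<lambda>i. lk a i - c i * \<mu> i)" unfolding r_def by (rule lookup_Abs_poly_mapping) (simp add: fin_n)
  have cle: "c i * \<mu> i \<le> lk a i" for i
  proof -
    have "c i * \<mu> i \<le> s i * \<mu> i" using c(1) by (simp add: mult_right_mono)
    also have "\<dots> \<le> lk a i" unfolding s_def by (rule div_times_less_eq_dividend)
    finally show ?thesis .
  qed
  have "a = b + r" by (rule poly_mapping_eqI) (simp add: lookup_add lb lr cle)
  moreover have "wt w b = d * M"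
  proof -
    have "wt w b = (\<Sum>i\<in>UNIV. c i * M)" unfolding wt_def lb
    proof (rule sum.cong)
      fix i show "c i * \<mu> i * w i = c i * M" using wm[of i] by (simp add: mult.assoc mult.commute)
    qed simp
    also have "\<dots> = d * M" by (simp add: sum_distrib_right[symmetric] c(2))
    finally show ?thesis .
  qed
  ultimately show ?thesis by blast
qed

lemma mono_in_Ipow:
  fixes lam :: "'n::finite \<Rightarrow> nat"
  assumes hw: "\<And>i. lam i * w i = T" and T: "T \<ge> 1"
    and sp: "\<And>a. 2 * T \<le> wt w a \<Longrightarrow> \<exists>b r. a = b + r \<and> wt w b = T"
  shows "k \<ge> 1 \<Longrightarrow> k * T \<le> wt w a \<Longrightarrow>
    (sng a 1 :: ('n, 'k::field) mpoly) \<in> ideal_pow (integral_closure_ideal (ideal_gen (range (\<lambda>i. var i ^ lam i)))) k"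
proof (induction k arbitrary: a)
  case 0 then show ?case by simp
next
  case (Suc k)
  let ?I = "integral_closure_ideal (ideal_gen (range (\<lambda>i. var i ^ lam i))) :: ('n, 'k) mpoly set"
  show ?case
  proof (cases "k = 0")
    case True
    then have "T \<le> wt w a" using Suc.prems by simp
    then have "(sng a 1 :: ('n, 'k) mpoly) \<in> ?I" by (rule mono_in_I[OF hw T])
    then have "(sng a 1 :: ('n, 'k) mpoly) * 1 \<in> ideal_prod ?I UNIV" by (rule ideal_prod_mem) simp
    then show ?thesis using True by simp
  next
    case False
    have "2 * T \<le> Suc k * T" using False by (intro mult_le_mono1) simp
    then have "2 * T \<le> wt w a" using Suc.prems(2) by linarith
    then obtain b r where br: "a = b + r" "wt w b = T" using sp by blast
    have "wt w a = T + wt w r" using br by (simp add: wt_add)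
    then have "k * T \<le> wt w r" using Suc.prems(2) by simp
    then have R: "(sng r 1 :: ('n, 'k) mpoly) \<in> ideal_pow ?I k" using Suc.IH False by simp
    have B: "(sng b 1 :: ('n, 'k) mpoly) \<in> ?I" using br(2) by (intro mono_in_I[OF hw T]) simp
    have "(sng a 1 :: ('n, 'k) mpoly) = sng b 1 * sng r 1" using br(1) by (simp add: mult_single)
    then show ?thesis using ideal_prod_mem[OF B R] by simp
  qed
qed

lemma WW_in_Ipow:
  fixes lam :: "'n::finite \<Rightarrow> nat"
  assumes hw: "\<And>i. lam i * w i = T" and T: "T \<ge> 1"
    and sp: "\<And>a. 2 * T \<le> wt w a \<Longrightarrow> \<exists>b r. a = b + r \<and> wt w b = T"
    and k: "k \<ge> 1"
  shows "(WW w (k * T) :: ('n, 'k::field) mpoly set)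
     \<subseteq> ideal_pow (integral_closure_ideal (ideal_gen (range (\<lambda>i. var i ^ lam i)))) k"
proof (rule subsetI)
  fix f :: "('n, 'k) mpoly" assume f: "f \<in> WW w (k * T)"
  have "f = (\<Sum>a\<in>kys f. sng a (lk f a))" by (simp add: pm_sum_single)
  also have "\<dots> = (\<Sum>a\<in>kys f. sng 0 (lk f a) * sng a 1)" by (simp add: mult_single)
  finally have feq: "f = (\<Sum>a\<in>kys f. sng 0 (lk f a) * sng a 1)" .
  have "(\<Sum>a\<in>kys f. sng 0 (lk f a) * sng a 1)
     \<in> ideal_pow (integral_closure_ideal (ideal_gen (range (\<lambda>i. var i ^ lam i)))) k"
  proof (rule ideal_pow_sum)
    fix a assume "a \<in> kys f"
    then have "k * T \<le> wt w a" using f unfolding WW_def by blast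
    then have "(sng a 1 :: ('n, 'k) mpoly) \<in> ideal_pow (integral_closure_ideal (ideal_gen (range (\<lambda>i. var i ^ lam i)))) k"
      using mono_in_Ipow[OF hw T sp k] by blast
    then show "sng 0 (lk f a) * sng a 1 \<in> ideal_pow (integral_closure_ideal (ideal_gen (range (\<lambda>i. var i ^ lam i)))) k"
      by (rule ideal_pow_mult)
  qed simp
  then show "f \<in> ideal_pow (integral_closure_ideal (ideal_gen (range (\<lambda>i. var i ^ lam i)))) k"
    using feq by simp
qed

theorem corollary4p4:
  fixes lam :: "'n::finite \<Rightarrow> nat"
  assumes "CARD('n) \<ge> 3"
    and "\<forall>i. lam i > 0"
    and "Gcd (range lam) > CARD('n) - 2"
  shows "normal_ideal (I_lambda lam :: ('n, 'k::field) mpoly set)"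
proof -
  define d where "d = Gcd (range lam)"
  have dn: "CARD('n) \<le> d + 1" using assms(1,3) unfolding d_def by linarith
  have ddvd: "d dvd lam i" for i unfolding d_def by (rule Gcd_dvd) simp
  have dpos: "d > 0"
  proof (rule ccontr)
    assume "\<not> d > 0" then have "d = 0" by simp
    then have "lam i = 0" for i using ddvd[of i] by simp
    then show False using assms(2) by auto
  qed
  define \<mu> where "\<mu> i = lam i div d" for i
  have lamd: "lam i = d * \<mu> i" for i unfolding \<mu>_def using ddvd[of i] by simp
  have mupos: "\<mu> i > 0" for i using assms(2) lamd[of i] by (metis mult_0_right neq0_conv)
  define M where "M = prod \<mu> UNIV"
  have Mpos: "M > 0" unfolding M_def using mupos by (simp add: fin_n)
  define w where "w i = M div \<mu> i" for i
  have mudvd: "\<mu> i dvd M" for i unfolding M_def by (rule dvd_prodI) (simp_all add: fin_n)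
  have wm: "w i * \<mu> i = M" for i unfolding w_def using mudvd[of i] by simp
  define T where "T = d * M"
  have hw: "lam i * w i = T" for i unfolding T_def lamd using wm[of i] by (simp add: mult.assoc mult.commute)
  have T: "T \<ge> 1" unfolding T_def using dpos Mpos by simp
  have sp: "\<exists>b r. a = b + r \<and> wt w b = T" if "2 * T \<le> wt w a" for a :: "'n \<Rightarrow>\<^sub>0 nat"
    using split_mono[where \<mu>=\<mu> and w=w and M=M and d=d, OF mupos wm Mpos dn] that unfolding T_def by blast
  let ?J = "ideal_gen (range (\<lambda>i. var i ^ lam i)) :: ('n, 'k) mpoly set"
  let ?I = "integral_closure_ideal ?J"
  have IW: "?I \<subseteq> WW w T" by (rule I_WW[OF hw])
  show ?thesis unfolding normal_ideal_def I_lambda_def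
  proof (intro allI impI)
    fix k :: nat assume k: "k \<ge> 1"
    show "integral_closure_ideal (ideal_pow ?I k) = ideal_pow ?I k"
    proof (rule subset_antisym)
      show "integral_closure_ideal (ideal_pow ?I k) \<subseteq> ideal_pow ?I k"
        using closure_Ipow_WW[OF IW, of k] WW_in_Ipow[OF hw T sp k] by blast
      show "ideal_pow ?I k \<subseteq> integral_closure_ideal (ideal_pow ?I k)"
        by (rule closure_superset[OF k])
    qed
  qed
qed

end
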